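(* Let $\phi\in\,]0,\pi[$, $M\in\mathbb{R}$, $N>0$. Let $\Sigma$ be the Keplerian branch around ${\rm O}$ in the plane ${\rm O}xy$ with equation $r=My+N$. Consider the affine map $(x_1,y_1)\mapsto(x_2,y_2)$ defined by $x_1=x_2\sin\phi-y_2M\cos\phi-N\cos\phi$, $y_1=y_2$. Then the image of $\Sigma$ by this map is the Keplerian branch around ${\rm O}$ with equation $r=x\cos\phi+yM\sin\phi+N\sin\phi$.
   Context: In the Euclidean plane ${\rm O}xy$, $r=\sqrt{x^2+y^2}$. A Keplerian branch around ${\rm O}$ is the image of a solution of Newton's system $\ddot q=-q/\|q\|^3$ (extended through collisions by bouncing back along the same ray with the same energy). For $\gamma>0$, the set of points satisfying $r=\alpha x+\beta y+\gamma$ is an (irreducible) Keplerian branch around ${\rm O}$, and every nonrectilinear Keplerian branch is of this form. *)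

theory Defs
  imports Complex_Main
begin

text \<open>The set of points of the plane Oxy satisfying r = alpha x + beta y + gamma,
  where r = sqrt(x^2+y^2). For gamma > 0 this is a Keplerian branch around O.\<close>
definition kepler_branch :: "real \<Rightarrow> real \<Rightarrow> real \<Rightarrow> (real \<times> real) set" where
  "kepler_branch \<alpha> \<beta> \<gamma> = {(x, y). sqrt (x\<^sup>2 + y\<^sup>2) = \<alpha> * x + \<beta> * y + \<gamma>}"

end

theory Submission
  imports Defs
begin

lemma sq_eq_iff: "(sqrt a = b) \<longleftrightarrow> (b \<ge> 0 \<and> a = b^2)" if "a \<ge> 0" for a b :: real
  using that by (metis real_sqrt_ge_zero real_sqrt_pow2 real_sqrt_unique)

lemma key:
  fixes s c x y L :: real
  assumes sc: "s^2 + c^2 = 1" and s: "s > 0"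
  shows "(L \<ge> 0 \<and> (s*x - c*L)^2 + y^2 = L^2) \<longleftrightarrow>
         (c*x + s*L \<ge> 0 \<and> x^2 + y^2 = (c*x + s*L)^2)"
proof -
  define w where "w = s*x - c*L"
  define u where "u = c*x + s*L"
  have E: "(w^2 + y^2 = L^2) \<longleftrightarrow> (x^2 + y^2 = u^2)"
  proof -
    have "w^2 - L^2 - (x^2 - u^2) = (s^2+c^2-1)*(x^2+L^2)"
      unfolding w_def u_def by (simp add: power2_eq_square algebra_simps)
    hence "w^2 - L^2 = x^2 - u^2" using sc by simp
    thus ?thesis by linarith
  qed
  have "c^2 \<le> 1^2" using sc zero_le_power2[of s] unfolding power_one by linarith
  hence c1: "\<bar>c\<bar> \<le> 1" using abs_le_square_iff[of c 1] by simp
  have "s*u - L - c*w = (s^2+c^2-1)*L" unfolding u_def w_def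
    by (simp add: algebra_simps power2_eq_square)
  hence su: "s*u = L + c*w" using sc by simp
  have sL: "s*L = u - c*x" unfolding u_def by simp
  show ?thesis
  proof
    assume A: "L \<ge> 0 \<and> (s*x - c*L)^2 + y^2 = L^2"
    hence "w^2 \<le> L^2" unfolding w_def using zero_le_power2[of y] by linarith
    hence "\<bar>w\<bar> \<le> L" using A abs_le_square_iff[of w L] by simp
    hence "\<bar>c\<bar>*\<bar>w\<bar> \<le> 1*L" using c1 A by (intro mult_mono) auto
    hence "\<bar>c*w\<bar> \<le> L" by (simp add: abs_mult)
    hence "s*u \<ge> 0" using su by linarith
    hence "u \<ge> 0" using s by (simp add: zero_le_mult_iff)
    thus "c*x + s*L \<ge> 0 \<and> x^2 + y^2 = (c*x + s*L)^2" using A E unfolding u_def w_def by simp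
  next
    assume A: "c*x + s*L \<ge> 0 \<and> x^2 + y^2 = (c*x + s*L)^2"
    hence u0: "u \<ge> 0" and Eu: "x^2+y^2 = u^2" unfolding u_def by auto
    hence "x^2 \<le> u^2" using zero_le_power2[of y] by linarith
    hence "\<bar>x\<bar> \<le> u" using u0 abs_le_square_iff[of x u] by simp
    hence "\<bar>c\<bar>*\<bar>x\<bar> \<le> 1*u" using c1 u0 by (intro mult_mono) auto
    hence "\<bar>c*x\<bar> \<le> u" by (simp add: abs_mult)
    hence "s*L \<ge> 0" using sL by linarith
    hence "L \<ge> 0" using s by (simp add: zero_le_mult_iff)
    thus "L \<ge> 0 \<and> (s*x - c*L)^2 + y^2 = L^2" using Eu E unfolding w_def by simp
  qed
qed

theorem lemma5:
  fixes \<phi> M N :: real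
  assumes "0 < \<phi>" and "\<phi> < pi" and "0 < N"
  shows "{(x2, y2). \<exists>x1 y1. (x1, y1) \<in> kepler_branch 0 M N \<and>
            x1 = x2 * sin \<phi> - y2 * M * cos \<phi> - N * cos \<phi> \<and> y1 = y2}
         = kepler_branch (cos \<phi>) (M * sin \<phi>) (N * sin \<phi>)"
proof -
  have s: "sin \<phi> > 0" using assms sin_gt_zero by blast
  have sc: "(sin \<phi>)^2 + (cos \<phi>)^2 = 1" by simp
  have "\<And>x y. (sqrt ((x * sin \<phi> - y * M * cos \<phi> - N * cos \<phi>)^2 + y^2) = M*y + N)
     \<longleftrightarrow> (sqrt (x^2 + y^2) = cos \<phi> * x + M * sin \<phi> * y + N * sin \<phi>)"
  proof -
    fix x y
    have l: "x * sin \<phi> - y * M * cos \<phi> - N * cos \<phi> = sin \<phi> * x - cos \<phi> * (M*y+N)"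
      by (simp add: algebra_simps)
    have r: "cos \<phi> * x + M * sin \<phi> * y + N * sin \<phi> = cos \<phi> * x + sin \<phi> * (M*y+N)"
      by (simp add: algebra_simps)
    have a: "(sqrt ((sin \<phi> * x - cos \<phi> * (M*y+N))^2 + y^2) = M*y+N) \<longleftrightarrow>
       (M*y+N \<ge> 0 \<and> (sin \<phi> * x - cos \<phi> * (M*y+N))^2 + y^2 = (M*y+N)^2)"
      by (rule sq_eq_iff) simp
    have b: "(sqrt (x^2 + y^2) = cos \<phi> * x + sin \<phi> * (M*y+N)) \<longleftrightarrow>
       (cos \<phi> * x + sin \<phi> * (M*y+N) \<ge> 0 \<and> x^2 + y^2 = (cos \<phi> * x + sin \<phi> * (M*y+N))^2)"
      by (rule sq_eq_iff) simp
    show "?thesis x y" unfolding l r a b by (rule key[OF sc s])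
  qed
  thus ?thesis unfolding kepler_branch_def by (auto simp del: real_sqrt_eq_iff)
qed

end
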